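(* The only pairs of natural numbers $(x,y)$ (with $0 \in \mathbb{N}$) such that $3^x-2^y$ is a perfect square are $(0,0),(1,1),(2,3),(3,1),(4,5)$.
   Context: Here $\mathbb{N}=\{0,1,2,\dots\}$, and a perfect square means $n^2$ for some $n\in\mathbb{N}$. *)

theory Defs
  imports Main
begin

end

theory Submission imports Defs "HOL-Computational_Algebra.Primes" begin

fun mul :: "int \<times> int \<Rightarrow> int \<times> int \<Rightarrow> int \<times> int" where
  "mul (a,b) (c,d) = (a*c - 2*b*d, a*d + b*c)"

fun pw :: "int \<times> int \<Rightarrow> nat \<Rightarrow> int \<times> int" where
  "pw z 0 = (1,0)"
| "pw z (Suc n) = mul z (pw z n)"

lemma mul_comm: "mul p q = mul q p"
  by (cases p; cases q) (simp add: algebra_simps)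

lemma mul_assoc: "mul (mul p q) r = mul p (mul q r)"
  by (cases p; cases q; cases r) (simp add: algebra_simps)

lemma mul_one: "mul (1,0) q = q"
  by (cases q) simp

lemma pw_add: "pw z (m+n) = mul (pw z m) (pw z n)"
  by (induction m) (simp_all add: mul_one mul_assoc)

lemma pw_mult: "pw z (m*n) = pw (pw z m) n"
  by (induction n) (simp_all add: pw_add)

definition A :: "nat \<Rightarrow> int \<times> int" where "A x = pw (1,1) x"

lemma A_Suc: "A (Suc x) = (fst (A x) - 2 * snd (A x), fst (A x) + snd (A x))"
  unfolding A_def by (cases "pw (1,1) x") simp

lemma A_0: "A 0 = (1,0)" unfolding A_def by simp

lemma A_fst_odd: "odd (fst (A x))"
  by (induction x) (simp_all add: A_Suc A_0)

definition Good :: "nat \<Rightarrow> int \<times> int \<Rightarrow> bool" where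
  "Good K z \<longleftrightarrow> (\<exists>g1 g2. z = (1 + 2^K*g1, 2^K*g2) \<and> even g1 \<and> odd g2)"

lemma good_sq:
  assumes "Good K z" "K \<ge> 1" shows "Good (Suc K) (mul z z)"
proof -
  obtain g1 g2 where z: "z = (1 + 2^K*g1, 2^K*g2)" and e: "even g1" "odd g2"
    using assms Good_def by blast
  obtain h where h: "g1 = 2*h" using e by blast
  define t :: int where "t = 2^K"
  have te: "even t" using assms(2) unfolding t_def by simp
  have "mul z z = (1 + 2^Suc K * (g1 + t*(g1*h - g2^2)), 2^Suc K * (g2*(1+t*g1)))"
    unfolding z t_def[symmetric] h by (simp add: algebra_simps power2_eq_square t_def) 
  moreover have "even (g1 + t*(g1*h - g2^2))" using e te by simp
  moreover have "odd (g2*(1+t*g1))" using e te by simp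
  ultimately show ?thesis unfolding Good_def by blast
qed

lemma good_mul:
  assumes "Good K u" "v = (1 + 2^(Suc K)*b1, 2^(Suc K)*b2)" shows "Good K (mul u v)"
proof -
  obtain g1 g2 where u: "u = (1 + 2^K*g1, 2^K*g2)" and e: "even g1" "odd g2"
    using assms Good_def by blast
  define t :: int where "t = 2^K"
  have "mul u v = (1 + 2^K * (g1 + 2*b1 + 2*t*g1*b1 - 4*t*g2*b2),
                   2^K * (2*b2*(1+t*g1) + g2 + 2*t*g2*b1))"
    unfolding u assms(2) t_def by (simp add: algebra_simps)
  moreover have "even (g1 + 2*b1 + 2*t*g1*b1 - 4*t*g2*b2)" using e by simp
  moreover have "odd (2*b2*(1+t*g1) + g2 + 2*t*g2*b1)" using e by simp
  ultimately show ?thesis unfolding Good_def by blast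
qed


lemma A8: "A 8 = (17,56)" by (simp add: A_def eval_nat_numeral)

lemma good_pow: "m \<ge> 1 \<Longrightarrow> \<exists>K\<ge>3. Good K (pw (A 8) m)"
proof (induction m rule: less_induct)
  case (less m)
  have "m = 1 \<or> (\<exists>j. m = 2*j \<and> j \<ge> 1) \<or> (\<exists>j. m = 2*j+1 \<and> j \<ge> 1)"
    using less.prems by presburger
  moreover
  { assume "m = 1"
    hence "pw (A 8) m = (17,56)" by (simp add: A8)
    moreover have "Good 3 (17,56)" unfolding Good_def
      by (rule exI[of _ 2], rule exI[of _ 7]) simp
    ultimately have ?case by auto }
  moreover
  { fix j assume j: "m = 2*j" "j \<ge> 1"
    then obtain K where K: "K \<ge> 3" "Good K (pw (A 8) j)" using less.IH[of j] by auto
    have "pw (A 8) m = mul (pw (A 8) j) (pw (A 8) j)"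
      using j pw_mult[of "A 8" j 2] by (simp add: mult.commute numeral_eq_Suc mul_comm mul_one)
    hence ?case using good_sq[OF K(2)] K(1) by (intro exI[of _ "Suc K"]) auto }
  moreover
  { fix j assume j: "m = 2*j+1" "j \<ge> 1"
    then obtain K where K: "K \<ge> 3" "Good K (pw (A 8) j)" using less.IH[of j] by auto
    have e: "pw (A 8) (2*j) = mul (pw (A 8) j) (pw (A 8) j)"
      using pw_mult[of "A 8" j 2] by (simp add: mult.commute numeral_eq_Suc mul_comm mul_one)
    have G: "Good (Suc K) (pw (A 8) (2*j))" using e good_sq[OF K(2)] K(1) by simp
    then obtain g1 g2 where g: "pw (A 8) (2*j) = (1 + 2^Suc K*g1, 2^Suc K*g2)"
      unfolding Good_def by blast
    have "Suc K = Suc 3 + (K-3)" using K(1) by simp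
    hence p: "(2::int)^Suc K = 2^Suc 3 * 2^(K-3)" by (metis power_add)
    have v: "pw (A 8) (2*j) = (1 + 2^Suc 3*(2^(K-3)*g1), 2^Suc 3*(2^(K-3)*g2))"
      unfolding g p by simp
    have g3: "Good 3 (A 8)" unfolding A8 Good_def
      by (rule exI[of _ 2], rule exI[of _ 7]) simp
    have "pw (A 8) m = mul (A 8) (pw (A 8) (2*j))" using j by simp
    hence ?case using good_mul[OF g3 v] by auto }
  ultimately show ?case by blast
qed


lemma A_small: "A 0 = (1,0)" "A 1 = (1,1)" "A 2 = (-1,2)" "A 3 = (-5,1)" "A 4 = (-7,-4)"
  "A (Suc 0) = (1,1)" "A 5 = (1,-11)" "A 6 = (23,-10)" "A 7 = (43,13)"
  by (simp_all add: A_def eval_nat_numeral)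

lemma fin8:
  assumes "b0 + 8*w \<in> {1,-1::int}" "w \<noteq> 0" "b0 \<in> {0,1,2,-4,-11,-10,13}"
  shows False
proof -
  have m: "(b0 + 8*w) mod 8 = b0 mod 8" by simp
  from assms(1) have "b0 + 8*w = 1 \<or> b0 + 8*w = -1" by simp
  thus False
  proof
    assume h: "b0 + 8*w = 1"
    hence "b0 mod 8 = 1" using m by simp
    hence "b0 = 1" using assms(3) by auto
    thus False using h assms(2) by simp
  next
    assume h: "b0 + 8*w = -1"
    hence "b0 mod 8 = 7" using m by simp
    thus False using assms(3) by auto
  qed
qed

lemma B_pm1:
  assumes "snd (A x) = 1 \<or> snd (A x) = -1" shows "x = 1 \<or> x = 3"
proof -
  define x0 m where "x0 = x mod 8" and "m = x div 8"
  have x: "x = x0 + 8*m" unfolding x0_def m_def by simp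
  have x0: "x0 < 8" unfolding x0_def by simp
  have Ax: "A x = mul (A x0) (pw (A 8) m)"
    unfolding x A_def by (simp add: pw_add pw_mult)
  show ?thesis
  proof (cases "m = 0")
    case True
    hence "x < 8" using x x0 by simp
    hence "x = 0 \<or> x = 1 \<or> x = 2 \<or> x = 3 \<or> x = 4 \<or> x = 5 \<or> x = 6 \<or> x = 7" by arith
    thus ?thesis using assms by (auto simp: A_small)
  next
    case False
    then obtain K where K: "K \<ge> 3" "Good K (pw (A 8) m)" using good_pow[of m] by auto
    then obtain g1 g2 where g: "pw (A 8) m = (1 + 2^K*g1, 2^K*g2)" "even g1" "odd g2"
      unfolding Good_def by blast
    obtain a0 b0 where ab: "A x0 = (a0,b0)" by fastforce
    have a0: "odd a0" using A_fst_odd[of x0] ab by simp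
    obtain d where d: "K = 3 + d" using K(1) le_Suc_ex by blast
    have p: "(2::int)^K = 8 * 2^(K-3)" unfolding d by (simp add: power_add)
    define w where "w = 2^(K-3) * (a0*g2 + b0*g1)"
    have "snd (A x) = b0 + 8*w" unfolding Ax ab g w_def p by (simp add: algebra_simps)
    moreover have "odd (a0*g2 + b0*g1)" using a0 g by simp
    hence "a0*g2 + b0*g1 \<noteq> 0" by (metis even_zero)
    hence "w \<noteq> 0" unfolding w_def by simp
    moreover have "b0 \<in> {0,1,2,-4,-11,-10,13}"
    proof -
      have "x0 = 0 \<or> x0 = 1 \<or> x0 = 2 \<or> x0 = 3 \<or> x0 = 4 \<or> x0 = 5 \<or> x0 = 6 \<or> x0 = 7"
        using x0 by arith
      thus ?thesis using ab by (auto simp: A_small)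
    qed
    ultimately have "b0 + 8*w \<in> {1,-1}" "w \<noteq> 0" "b0 \<in> {0,1,2,-4,-11,-10,13}" using assms by auto
    hence False by (rule fin8)
    thus ?thesis ..
  qed
qed


definition P :: "nat \<Rightarrow> int \<Rightarrow> int \<Rightarrow> bool" where
  "P x a b \<longleftrightarrow> (\<exists>s. (s = 1 \<or> s = -1) \<and> a = s * fst (A x) \<and>
                 (b = s * snd (A x) \<or> b = - (s * snd (A x))))"

lemma P_neg: "P x a (-b) \<Longrightarrow> P x a b"
  unfolding P_def by (metis minus_minus neg_equal_iff_equal)

lemma desc_step:
  assumes IH: "\<And>a b. coprime a b \<Longrightarrow> a^2 + 2*b^2 = 3^x \<Longrightarrow> P x a b"
    and cop: "coprime a b" and nrm: "a^2 + 2*b^2 = 3^Suc x" and d: "(3::int) dvd a - b"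
  shows "P (Suc x) a b"
proof -
  obtain k where k: "a - b = 3*k" using d by blast
  define a' where "a' = b + k"
  define b' where "b' = -k"
  have a: "a = a' - 2*b'" and b: "b = a' + b'" using k unfolding a'_def b'_def by simp_all
  have "3 * (a'^2 + 2*b'^2) = 3 * 3^x" using nrm unfolding a b
    by (simp add: algebra_simps power2_eq_square)
  hence n': "a'^2 + 2*b'^2 = 3^x" by simp
  have cop': "coprime a' b'"
  proof (rule coprimeI)
    fix c assume "c dvd a'" "c dvd b'"
    hence "c dvd a" "c dvd b" unfolding a b by simp_all
    thus "is_unit c" using cop coprime_common_divisor by blast
  qed
  obtain p q where pq: "A x = (p,q)" by fastforce
  have AS: "A (Suc x) = (p - 2*q, p + q)" using A_Suc[of x] pq by simp
  from IH[OF cop' n'] obtain s where s: "s = 1 \<or> s = -1" "a' = s*p"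
     "b' = s*q \<or> b' = -(s*q)" unfolding P_def pq by auto
  from s(3) show ?thesis
  proof
    assume "b' = s*q"
    hence "a = s*(p - 2*q)" "b = s*(p+q)" unfolding a b s(2) by (simp_all add: algebra_simps)
    thus ?thesis unfolding P_def AS using s(1) by auto
  next
    assume bq: "b' = -(s*q)"
    hence ab: "a = s*(p + 2*q)" "b = s*(p-q)" unfolding a b s(2) by (simp_all add: algebra_simps)
    show ?thesis
    proof (cases x)
      case 0
      hence "p = 1" "q = 0" using pq A_0 by auto
      thus ?thesis unfolding P_def ab using s(1) 0 A_small by auto
    next
      case (Suc y)
      obtain p0 q0 where pq0: "A y = (p0,q0)" by fastforce
      have e: "p = p0 - 2*q0" "q = p0 + q0" using A_Suc[of y] pq0 pq Suc by auto
      have "a = 3*(s*p0)" "b = 3*(-(s*q0))" using ab unfolding e by (simp_all add: algebra_simps)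
      hence "(3::int) dvd a" "(3::int) dvd b" by (metis dvd_triv_left)+
      hence "is_unit (3::int)" using cop coprime_common_divisor by blast
      thus ?thesis by simp
    qed
  qed
qed

lemma desc: "coprime a b \<Longrightarrow> a^2 + 2*b^2 = 3^x \<Longrightarrow> P x a b"
proof (induction x arbitrary: a b)
  case 0
  have "b = 0"
  proof (rule ccontr)
    assume "b \<noteq> 0"
    hence "b^2 > 0" by simp
    hence "b^2 \<ge> 1" by linarith
    moreover have "a^2 \<ge> 0" by simp
    moreover have "a^2 + 2*b^2 = 1" using 0(2) by simp
    ultimately show False by linarith
  qed
  hence "a^2 = 1" using 0(2) by simp
  hence "a = 1 \<or> a = -1" by (simp add: power2_eq_1_iff)
  thus ?case unfolding P_def using \<open>b = 0\<close> A_0 by auto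
next
  case (Suc x)
  have "3 dvd a^2 + 2*b^2" using Suc.prems(2) by simp
  hence "(3::int) dvd (a - b) * (a + b)"
  proof -
    have "(a - b) * (a + b) = (a^2 + 2*b^2) - 3*b^2" by (simp add: algebra_simps power2_eq_square)
    moreover have "3 dvd (a^2 + 2*b^2) - 3*b^2"
      by (rule dvd_diff) (use \<open>3 dvd a^2 + 2*b^2\<close> in simp_all)
    ultimately show ?thesis by (simp only:)
  qed
  moreover have "prime (3::int)" by simp
  ultimately have "3 dvd a - b \<or> 3 dvd a + b" using prime_dvd_mult_iff by blast
  thus ?case
  proof
    assume "3 dvd a - b"
    thus ?case using desc_step[OF Suc.IH Suc.prems] by blast
  next
    assume "3 dvd a + b"
    hence "3 dvd a - (-b)" by simp
    moreover have "coprime a (-b)" using Suc.prems(1) by simp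
    moreover have "a^2 + 2*(-b)^2 = 3^Suc x" using Suc.prems(2) by simp
    ultimately have "P (Suc x) a (-b)" using desc_step[OF Suc.IH] by blast
    thus ?case by (rule P_neg)
  qed
qed

lemma y1: "(3::int)^x - 2 = n^2 \<Longrightarrow> x = 1 \<or> x = 3"
proof -
  assume h: "(3::int)^x - 2 = n^2"
  have "P x n 1" by (rule desc) (use h in simp_all)
  hence "snd (A x) = 1 \<or> snd (A x) = -1" unfolding P_def
    by (auto simp: zmult_eq_1_iff)
  thus ?thesis by (rule B_pm1)
qed


lemma sq_mod3: "((n::int)^2) mod 3 \<noteq> 2"
proof -
  have "n^2 mod 3 = (n mod 3)^2 mod 3" by (simp add: power_mod)
  moreover have "n mod 3 = 0 \<or> n mod 3 = 1 \<or> n mod 3 = 2" by arith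
  ultimately show ?thesis by (auto simp: power2_eq_square)
qed

lemma y0: "(3::int)^x - 1 = n^2 \<Longrightarrow> x = 0"
proof (rule ccontr)
  assume h: "(3::int)^x - 1 = n^2" and "x \<noteq> 0"
  then obtain z where "x = Suc z" by (cases x) auto
  hence "n^2 + 1 = 3 * 3^z" using h by simp
  hence h3: "(n^2 + 1) mod 3 = 0" by simp
  have mf: "\<And>m::int. (m + 1) mod 3 = 0 \<Longrightarrow> m mod 3 = 2" by presburger
  have "n^2 mod 3 = 2" by (rule mf[OF h3])
  thus False using sq_mod3 by blast
qed

lemma nine_mod4: "(9::nat)^i mod 4 = 1"
proof -
  have "(9::nat)^i mod 4 = (9 mod 4)^i mod 4" by (rule power_mod[symmetric])
  thus ?thesis by simp
qed

lemma three_odd_mod4: "odd k \<Longrightarrow> (3::nat)^k mod 4 = 3"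
proof -
  assume "odd k"
  then obtain i where k: "k = Suc (2*i)" by (metis oddE Suc_eq_plus1)
  have "(3::nat)^k = 3 * 9^i" unfolding k by (simp add: power_mult)
  hence "(3::nat)^k mod 4 = (3 * (9^i mod 4)) mod 4" by (simp add: mod_mult_right_eq)
  thus ?thesis by (simp add: nine_mod4)
qed

lemma sq_mod4: "((n::nat)^2) mod 4 = 0 \<or> (n^2) mod 4 = 1"
proof -
  have "n^2 mod 4 = (n mod 4)^2 mod 4" by (simp add: power_mod)
  moreover have "n mod 4 = 0 \<or> n mod 4 = 1 \<or> n mod 4 = 2 \<or> n mod 4 = 3" by arith
  ultimately show ?thesis by (auto simp: power2_eq_square)
qed

lemma pow2_dvd: "d dvd (2::nat)^y \<Longrightarrow> \<exists>i\<le>y. d = 2^i"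
  using divides_primepow_nat[of 2 d y] by simp

lemma three_ne_pow2: "(3::nat)^k \<noteq> 2 * m"
proof
  assume "(3::nat)^k = 2*m"
  hence "even ((3::nat)^k)" by simp
  thus False by simp
qed

lemma pow3: "(3::nat)^k = 1 + 2^c \<Longrightarrow> (k = 1 \<and> c = 1) \<or> (k = 2 \<and> c = 3)"
proof -
  assume h: "(3::nat)^k = 1 + 2^c"
  show ?thesis
  proof (cases "even k")
    case False
    hence m: "(1 + 2^c) mod 4 = (3::nat)" using three_odd_mod4[OF False] h by simp
    have "c = 1"
    proof (rule ccontr)
      assume "c \<noteq> 1"
      moreover have "c \<noteq> 0" using m by (cases c) auto
      ultimately have "\<exists>d. c = d + 2" by presburger
      then obtain d where "c = d + 2" by blast
      hence "(2::nat)^c = 4 * 2^d" by (simp add: power_add)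
      thus False using m by simp
    qed
    hence "(3::nat)^k = 3^1" using h by simp
    hence "k = 1" using power_inject_exp[of "3::nat" k 1] by simp
    thus ?thesis using \<open>c = 1\<close> by simp
  next
    case True
    then obtain j where k: "k = 2*j" by blast
    define w :: nat where "w = 3^j"
    have w1: "w \<ge> 1" unfolding w_def by simp
    have "w^2 = 3^k" unfolding w_def k by (metis power_mult mult.commute)
    hence "w^2 = 1 + 2^c" using h by simp
    obtain v where wv: "w = Suc v" using w1 by (cases w) auto
    have vv: "v * (v + 2) = 2^c" using \<open>w^2 = 1 + 2^c\<close> unfolding wv
      by (simp add: power2_eq_square algebra_simps)
    have "v dvd 2^c" "v + 2 dvd 2^c" unfolding vv[symmetric] by (rule dvd_triv_left, rule dvd_triv_right)
    then obtain p q where p0: "v = 2^p" and q0: "v + 2 = 2^q" using pow2_dvd by blast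
    have p: "w - 1 = 2^p" and q: "w + 1 = 2^q" using p0 q0 wv by simp_all
    have "w \<noteq> 2" unfolding w_def using three_ne_pow2[of j 1] by simp
    have "w \<noteq> 1" using \<open>w^2 = 1 + 2^c\<close> by auto
    have "p \<noteq> 0"
    proof
      assume "p = 0" thus False using p w1 \<open>w \<noteq> 2\<close> by simp
    qed
    have "p = 1"
    proof (rule ccontr)
      assume "p \<noteq> 1"
      hence "\<exists>d. p = d + 2" using \<open>p \<noteq> 0\<close> by presburger
      then obtain d where "p = d + 2" by blast
      hence "(2::nat)^p = 4 * 2^d" by (simp add: power_add)
      hence "w = 4 * 2^d + 1" using p w1 by simp
      hence "(2::nat)^q = 4 * 2^d + 2" using q by simp
      moreover have "q \<ge> 2"
      proof (rule ccontr)
        assume "\<not> q \<ge> 2"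
        hence "q = 0 \<or> q = 1" by arith
        thus False using \<open>(2::nat)^q = 4 * 2^d + 2\<close> by auto
      qed
      hence "\<exists>e. q = e + 2" by presburger
      then obtain e where "q = e + 2" by blast
      hence "(2::nat)^q = 4 * 2^e" by (simp add: power_add)
      ultimately have eq: "(4 * 2^e) mod 4 = (4 * 2^d + 2) mod (4::nat)" by simp
      have g: "\<And>t::nat. (4*t+2) mod 4 = 2" by presburger
      have "(4 * 2^e) mod 4 = (0::nat)" by simp
      thus False using eq g[of "2^d"] by simp
    qed
    hence "w = 3" using p w1 by simp
    hence "j = 1" unfolding w_def using power_inject_exp[of "3::nat" j 1] by simp
    hence "k = 2" using k by simp
    have "(2::nat)^c = 2^3" using h \<open>k = 2\<close> by simp
    hence "c = 3" using power_inject_exp[of "2::nat" c 3] by simp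
    thus ?thesis using \<open>k = 2\<close> by simp
  qed
qed


lemma y2:
  assumes h: "(3::nat)^x = N^2 + 2^y" and y: "y \<ge> 2"
  shows "(x = 2 \<and> y = 3) \<or> (x = 4 \<and> y = 5)"
proof -
  have "\<exists>d. y = d + 2" using y by presburger
  then obtain d where yd: "y = d + 2" by blast
  have p4: "(2::nat)^y = 4 * 2^d" unfolding yd by (simp add: power_add)
  have "even x"
  proof (rule ccontr)
    assume "odd x"
    hence m3: "(3::nat)^x mod 4 = 3" by (rule three_odd_mod4)
    have g: "\<And>a b::nat. (a + 4*b) mod 4 = a mod 4" by presburger
    have "(N^2 + 2^y) mod 4 = N^2 mod 4" unfolding p4 by (rule g)
    hence "N^2 mod 4 = 3" using m3 h by simp
    thus False using sq_mod4[of N] by simp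
  qed
  then obtain k where x: "x = 2*k" by blast
  have e: "(3^k)^2 = N^2 + 2^y" using h unfolding x by (metis power_mult mult.commute)
  have "N^2 \<le> (3^k)^2" using e by simp
  hence "N \<le> 3^k" by (rule power2_le_imp_le) simp
  define u where "u = 3^k - N"
  have uN: "3^k = u + N" unfolding u_def using \<open>N \<le> 3^k\<close> by simp
  have "u*(u+2*N) + N^2 = (u+N)^2" by (simp add: power2_eq_square algebra_simps)
  hence uv: "u * (u + 2*N) = 2^y" using e uN by simp
  have "u dvd 2^y" "u + 2*N dvd 2^y" unfolding uv[symmetric] by (rule dvd_triv_left, rule dvd_triv_right)
  then obtain i j where ui: "u = 2^i" and vj: "u + 2*N = 2^j" using pow2_dvd by blast
  have "(2::nat)^y = 2^(i+j)" using uv ui vj by (simp add: power_add)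
  hence yij: "y = i + j" using power_inject_exp[of "2::nat" y "i+j"] by simp
  have s: "2 * 3^k = (2::nat)^i + 2^j" using uN ui vj by simp
  have "(2::nat)^i \<le> 2^j" using ui vj by (metis le_add1)
  hence "i \<le> j" using power_increasing_iff[of "2::nat" i j] by simp
  have g2: "\<And>t::nat. 2 * t \<noteq> 1 + 2 * (2 ^ t)" by presburger
  show ?thesis
  proof (cases "i = 0")
    case True
    show ?thesis
    proof (cases "j = 0")
      case True
      thus ?thesis using yij \<open>i = 0\<close> y by simp
    next
      case False
      then obtain j' where "j = Suc j'" by (cases j) auto
      hence "2 * 3^k = (1::nat) + 2 * 2^j'" using s \<open>i = 0\<close> by simp
      hence "even ((1::nat) + 2 * 2^j')" by (metis dvd_triv_left)
      thus ?thesis by simp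
    qed
  next
    case False
    show ?thesis
    proof (cases "i = 1")
      case False
      hence "\<exists>a. i = a + 2" using \<open>i \<noteq> 0\<close> by presburger
      then obtain a where a: "i = a + 2" by blast
      have "\<exists>b. j = b + 2" using a \<open>i \<le> j\<close> by presburger
      then obtain b where b: "j = b + 2" by blast
      have "2 * 3^k = (2::nat) * (2 * (2^a + 2^b))" using s unfolding a b by (simp add: power_add)
      hence "(3::nat)^k = 2 * (2^a + 2^b)" by simp
      thus ?thesis using three_ne_pow2 by blast
    next
      case True
      have "j \<noteq> 0" using \<open>i \<le> j\<close> True by simp
      then obtain c where c: "j = Suc c" by (cases j) auto
      have "(3::nat)^k = 1 + 2^c" using s True c by simp
      hence "(k = 1 \<and> c = 1) \<or> (k = 2 \<and> c = 3)" by (rule pow3)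
      thus ?thesis using x yij True c by auto
    qed
  qed
qed

theorem mainTheorem1:
  fixes x y :: nat
  shows "(\<exists>n::nat. (3::int) ^ x - 2 ^ y = (int n) ^ 2) \<longleftrightarrow>
         (x, y) \<in> {(0, 0), (1, 1), (2, 3), (3, 1), (4, 5)}"
proof
  assume "\<exists>n::nat. (3::int) ^ x - 2 ^ y = (int n) ^ 2"
  then obtain n :: nat where h: "(3::int) ^ x - 2 ^ y = (int n) ^ 2" by blast
  show "(x, y) \<in> {(0, 0), (1, 1), (2, 3), (3, 1), (4, 5)}"
  proof (cases "y \<ge> 2")
    case True
    have "int (3^x) = int (n^2 + 2^y)" using h by simp
    hence "(3::nat)^x = n^2 + 2^y" by (simp only: of_nat_eq_iff)
    from y2[OF this True] show ?thesis by auto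
  next
    case False
    hence "y = 0 \<or> y = 1" by arith
    thus ?thesis
    proof
      assume yz: "y = 0"
      hence "(3::int)^x - 1 = (int n)^2" using h by simp
      hence "x = 0" by (rule y0)
      thus ?thesis using yz by simp
    next
      assume yo: "y = 1"
      hence "(3::int)^x - 2 = (int n)^2" using h by simp
      hence "x = 1 \<or> x = 3" by (rule y1)
      thus ?thesis using yo by auto
    qed
  qed
next
  assume "(x, y) \<in> {(0, 0), (1, 1), (2, 3), (3, 1), (4, 5)}"
  hence "(x,y) = (0,0) \<or> (x,y) = (1,1) \<or> (x,y) = (2,3) \<or> (x,y) = (3,1) \<or> (x,y) = (4,5)" by simp
  thus "\<exists>n::nat. (3::int) ^ x - 2 ^ y = (int n) ^ 2"
  proof (elim disjE)
    assume "(x,y) = (0,0)" thus ?thesis by (intro exI[of _ 0]) simp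
  next
    assume "(x,y) = (1,1)" thus ?thesis by (intro exI[of _ 1]) simp
  next
    assume "(x,y) = (2,3)" thus ?thesis by (intro exI[of _ 1]) simp
  next
    assume "(x,y) = (3,1)" thus ?thesis by (intro exI[of _ 5]) simp
  next
    assume "(x,y) = (4,5)" thus ?thesis by (intro exI[of _ 7]) simp
  qed
qed

end
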